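(* Let $C$ be a finite cyclic group of even order. Then there exist permutations $\alpha$ and $\beta$ of $C$ such that $c\,\alpha(c)=\beta(c)$ for all $c\in C$ with $c\neq1$, and moreover $\beta(1)=1$ and $\alpha(1)\neq1$. *)

theory Defs
  imports "HOL-Algebra.Elementary_Groups"
begin

end

theory Submission
  imports Defs "HOL-Algebra.Multiplicative_Group"
begin

lemma perm_ab:
  fixes m n :: nat
  assumes "n = 2*m" "m \<ge> 1"
  defines "a \<equiv> (\<lambda>i. if i = 0 then m else if i < m then i else (i+1) mod n)"
  defines "b \<equiv> (\<lambda>i. if i = 0 then 0 else (i + a i) mod n)"
  shows "bij_betw a {0..<n} {0..<n}" "bij_betw b {0..<n} {0..<n}"
proof -
  have "inj_on a {0..<n}"
  proof (rule inj_onI)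
    fix x y assume "x \<in> {0..<n}" "y \<in> {0..<n}" "a x = a y"
    then show "x = y" using assms(1,2) unfolding a_def
      by (auto split: if_splits simp: mod_if)
  qed
  moreover have "a ` {0..<n} \<subseteq> {0..<n}" using assms unfolding a_def by auto
  ultimately show "bij_betw a {0..<n} {0..<n}"
    by (simp add: bij_betw_def endo_inj_surj)
  have bi: "\<And>i. 0 < i \<Longrightarrow> i < n \<Longrightarrow> b i = (if i < m then 2*i else 2*i+1-n)"
    unfolding b_def a_def using assms(1,2) by (auto simp: mod_if)
  have "inj_on b {0..<n}"
  proof (rule inj_onI)
    fix x y assume xy: "x \<in> {0..<n}" "y \<in> {0..<n}" "b x = b y"
    show "x = y"
    proof (cases "x = 0 \<or> y = 0")
      case True then show ?thesis using xy bi[of x] bi[of y] assms(1) unfolding b_def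
        by (auto split: if_splits)
    next
      case False
      then show ?thesis using xy bi[of x] bi[of y] assms(1) by (auto split: if_splits) presburger+
    qed
  qed
  moreover have "b ` {0..<n} \<subseteq> {0..<n}" using assms unfolding b_def by auto
  ultimately show "bij_betw b {0..<n} {0..<n}"
    by (simp add: bij_betw_def endo_inj_surj)
qed

theorem lemma4p6:
  fixes G :: "('a, 'b) monoid_scheme"
  assumes "group G" and "cyclic_group G" and "finite (carrier G)" and "even (order G)"
  shows "\<exists>\<alpha> \<beta>. bij_betw \<alpha> (carrier G) (carrier G) \<and> bij_betw \<beta> (carrier G) (carrier G)
     \<and> (\<forall>c \<in> carrier G. c \<noteq> \<one>\<^bsub>G\<^esub> \<longrightarrow> c \<otimes>\<^bsub>G\<^esub> \<alpha> c = \<beta> c)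
     \<and> \<beta> \<one>\<^bsub>G\<^esub> = \<one>\<^bsub>G\<^esub> \<and> \<alpha> \<one>\<^bsub>G\<^esub> \<noteq> \<one>\<^bsub>G\<^esub>"
proof -
  interpret group G by fact
  obtain g where g: "g \<in> carrier G" and car: "carrier G = range (\<lambda>k::int. g [^]\<^bsub>G\<^esub> k)"
    using assms(2) cyclic_group by blast
  define d where "d = group.ord G g"
  have d1: "d \<ge> 1" using ord_ge_1[OF assms(3) g] d_def by simp
  define e where "e = (\<lambda>i::nat. g [^]\<^bsub>G\<^esub> (int i))"
  have eeq: "\<And>i j. e i = e j \<longleftrightarrow> int d dvd (int j - int i)"
    unfolding e_def d_def using int_pow_eq[OF g] by blast
  have inj: "inj_on e {0..<d}"
  proof (rule inj_onI)
    fix x y assume "x \<in> {0..<d}" "y \<in> {0..<d}" "e x = e y"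
    then have "int d dvd (int y - int x)" "int y - int x < int d" "int x - int y < int d"
      using eeq by auto
    then show "x = y"
      using dvd_imp_le_int[of "int y - int x" "int d"] by (cases "int y - int x = 0") auto
  qed
  have img: "e ` {0..<d} = carrier G"
  proof
    show "e ` {0..<d} \<subseteq> carrier G" unfolding e_def using g by auto
    show "carrier G \<subseteq> e ` {0..<d}"
    proof
      fix c assume "c \<in> carrier G"
      then obtain k :: int where k: "c = g [^]\<^bsub>G\<^esub> k" using car by auto
      define i where "i = nat (k mod int d)"
      have ii: "int i = k mod int d" unfolding i_def using d1 by simp
      have "int i < int d" using d1 ii by simp
      then have "i < d" by simp
      moreover have "e i = c" unfolding e_def k d_def
        using int_pow_eq[OF g] ii d_def by (simp add: mod_eq_dvd_iff[symmetric] mod_mod_trivial)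
      ultimately show "c \<in> e ` {0..<d}" by auto
    qed
  qed
  have bij: "bij_betw e {0..<d} (carrier G)" using inj img by (simp add: bij_betw_def)
  have dn: "d = order G" unfolding order_def using bij bij_betw_same_card by fastforce
  obtain m where m: "d = 2*m" using assms(4) dn by blast
  have m1: "m \<ge> 1" using m d1 by simp
  define a where "a \<equiv> (\<lambda>i::nat. if i = 0 then m else if i < m then i else (i+1) mod d)"
  define b where "b \<equiv> (\<lambda>i. if i = 0 then 0 else (i + a i) mod d)"
  have ba: "bij_betw a {0..<d} {0..<d}" "bij_betw b {0..<d} {0..<d}"
    using perm_ab[OF m m1] unfolding a_def b_def by auto
  define f where "f = the_inv_into {0..<d} e"
  have fb: "bij_betw f (carrier G) {0..<d}" unfolding f_def using bij
    by (simp add: bij_betw_the_inv_into)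
  have ef: "\<And>c. c \<in> carrier G \<Longrightarrow> e (f c) = c" unfolding f_def using bij
    by (simp add: bij_betw_def f_the_inv_into_f)
  have fe: "\<And>i. i < d \<Longrightarrow> f (e i) = i" unfolding f_def using inj
    by (simp add: the_inv_into_f_f)
  have emod: "\<And>i. e (i mod d) = e i" using eeq
    by (metis mod_mod_trivial mod_eq_dvd_iff of_nat_mod)
  have emul: "\<And>i j. e i \<otimes>\<^bsub>G\<^esub> e j = e (i + j)" unfolding e_def using g
    by (simp add: int_pow_mult)
  have e0: "e 0 = \<one>\<^bsub>G\<^esub>" unfolding e_def by simp
  define \<alpha> where "\<alpha> = e \<circ> a \<circ> f"
  define \<beta> where "\<beta> = e \<circ> b \<circ> f"
  have "bij_betw \<alpha> (carrier G) (carrier G)" unfolding \<alpha>_def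
    by (meson ba(1) bij bij_betw_trans fb)
  moreover have "bij_betw \<beta> (carrier G) (carrier G)" unfolding \<beta>_def
    by (meson ba(2) bij bij_betw_trans fb)
  moreover have "\<forall>c \<in> carrier G. c \<noteq> \<one>\<^bsub>G\<^esub> \<longrightarrow> c \<otimes>\<^bsub>G\<^esub> \<alpha> c = \<beta> c"
  proof (intro ballI impI)
    fix c assume c: "c \<in> carrier G" "c \<noteq> \<one>\<^bsub>G\<^esub>"
    have "f c \<noteq> 0" using c ef e0 by metis
    then have "\<beta> c = e (f c + a (f c))" unfolding \<beta>_def b_def using emod by simp
    also have "\<dots> = e (f c) \<otimes>\<^bsub>G\<^esub> e (a (f c))" using emul by simp
    also have "\<dots> = c \<otimes>\<^bsub>G\<^esub> \<alpha> c" unfolding \<alpha>_def using ef c by simp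
    finally show "c \<otimes>\<^bsub>G\<^esub> \<alpha> c = \<beta> c" by simp
  qed
  moreover have f1: "f \<one>\<^bsub>G\<^esub> = 0" using fe[of 0] e0 d1 by simp
  moreover have "\<beta> \<one>\<^bsub>G\<^esub> = \<one>\<^bsub>G\<^esub>" unfolding \<beta>_def using f1 e0 b_def by simp
  moreover have "\<alpha> \<one>\<^bsub>G\<^esub> \<noteq> \<one>\<^bsub>G\<^esub>"
  proof
    assume "\<alpha> \<one>\<^bsub>G\<^esub> = \<one>\<^bsub>G\<^esub>"
    then have "e m = e 0" unfolding \<alpha>_def using f1 e0 a_def by simp
    then have "m = 0" using inj m m1 by (auto dest: inj_onD)
    then show False using m1 by simp
  qed
  ultimately show ?thesis by blast
qed

end
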